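(* Let $n=p'q$ where $p',q$ are distinct primes both at least $7$, and let $A=L(n;p')$. Then $D_A(n)=4$.
   Context: $\mathbb{Z}_n$ is the integers mod $n$, $U(n)$ its unit group. For nonempty $A\subseteq\mathbb{Z}_n\setminus\{0\}$, a sequence $(x_1,\ldots,x_k)$ is an $A$-weighted zero-sum sequence if $\sum a_ix_i=0$ for some $a_i\in A$; $D_A(n)$ is the least $k$ such that every length-$k$ sequence in $\mathbb{Z}_n$ has a nonempty $A$-weighted zero-sum subsequence. For odd $n=\prod p_i^{r_i}$, a prime $p\mid n$ and $a\in U(n)$, $\left(\frac{a}{p}\right)$ is the Legendre symbol of the image of $a$ in $\mathbb{Z}_p$ and $\left(\frac{a}{n}\right)=\prod\left(\frac{a}{p_i}\right)^{r_i}$. For a prime divisor $p'$ of $n$, $L(n;p')=\{a\in U(n): \left(\frac{a}{n}\right)=\left(\frac{a}{p'}\right)\}$. *)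

theory Defs
  imports "HOL-Number_Theory.Number_Theory"
begin

definition Zn :: "nat \<Rightarrow> int set" where
  "Zn n = {0..<int n}"

definition units_mod :: "nat \<Rightarrow> int set" where
  "units_mod n = {a \<in> Zn n. coprime a (int n)}"

definition jacobi_sym :: "int \<Rightarrow> nat \<Rightarrow> int" where
  "jacobi_sym a n = (\<Prod>p\<in>prime_factors n. Legendre a (int p) ^ multiplicity p n)"

definition L_set :: "nat \<Rightarrow> nat \<Rightarrow> int set" where
  "L_set n p' = {a \<in> units_mod n. jacobi_sym a n = Legendre a (int p')}"

definition has_weighted_zero_sum_subseq :: "nat \<Rightarrow> int set \<Rightarrow> int list \<Rightarrow> bool" where
  "has_weighted_zero_sum_subseq n A xs \<longleftrightarrow>
     (\<exists>I a. I \<subseteq> {..<length xs} \<and> I \<noteq> {} \<and> (\<forall>i\<in>I. a i \<in> A) \<and>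
        (\<Sum>i\<in>I. a i * xs ! i) mod int n = 0)"

definition D_weighted :: "int set \<Rightarrow> nat \<Rightarrow> nat" where
  "D_weighted A n = (LEAST k. \<forall>xs. length xs = k \<and> set xs \<subseteq> Zn n \<longrightarrow>
                              has_weighted_zero_sum_subseq n A xs)"

end

theory Submission
  imports Defs
begin


lemma Leg_cong:
  assumes "[a = b] (mod p)" shows "Legendre a p = Legendre b p"
proof -
  have "QuadRes p a = QuadRes p b" unfolding QuadRes_def
    using assms cong_trans cong_sym by blast
  moreover have "[a = 0] (mod p) = [b = 0] (mod p)" using assms cong_trans cong_sym by blast
  ultimately show ?thesis unfolding Legendre_def by simp
qed

lemma Leg_vals: "Legendre a p \<in> {-1,0,1}"
  unfolding Legendre_def by auto

lemma Leg_zero_iff: "Legendre a p = 0 \<longleftrightarrow> p dvd a"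
  unfolding Legendre_def by (auto simp: cong_0_iff)

lemma Leg_mult:
  assumes "prime (q::nat)" "q > 2"
  shows "Legendre (a*b) (int q) = Legendre a q * Legendre b q"
proof -
  have 1: "[Legendre (a*b) q = (a*b) ^ ((q - 1) div 2)] (mod q)"
    using euler_criterion assms by blast
  have 2: "[Legendre a q * Legendre b q = a ^ ((q - 1) div 2) * b ^ ((q - 1) div 2)] (mod q)"
    using euler_criterion assms cong_mult by blast
  have "[Legendre (a*b) q = Legendre a q * Legendre b q] (mod q)"
    using 1 2 by (metis cong_sym cong_trans power_mult_distrib)
  then have d: "int q dvd Legendre (a*b) q - Legendre a q * Legendre b q"
    by (simp add: cong_iff_dvd_diff)
  have "Legendre (a*b) q - Legendre a q * Legendre b q \<in> {-2,-1,0,1,2}"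
    using Leg_vals[of "a*b" q] Leg_vals[of a q] Leg_vals[of b q] by auto
  moreover have "\<And>z::int. z \<in> {-2,-1,1,2} \<Longrightarrow> \<not> int q dvd z"
  proof -
    fix z :: int assume "z \<in> {-2,-1,1,2}"
    then have "\<bar>z\<bar> < int q" "z \<noteq> 0" using assms by auto
    then show "\<not> int q dvd z"
      by (metis dvd_abs_iff not_le zdvd_imp_le zero_less_abs_iff)
  qed
  ultimately show ?thesis using d by fastforce
qed



lemma Leg_sq:
  assumes "prime (q::nat)" "\<not> int q dvd y" shows "Legendre (y^2) q = 1"
proof -
  have pq: "prime (int q)" using assms by simp
  have "\<not> int q dvd y^2" using prime_dvd_power[OF pq] assms(2) by blast
  then have "\<not> [y^2 = 0] (mod int q)" by (simp add: cong_0_iff)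
  moreover have "QuadRes q (y^2)" unfolding QuadRes_def using cong_refl by blast
  ultimately show ?thesis unfolding Legendre_def by simp
qed

lemma Leg_one: assumes "prime (q::nat)" shows "Legendre 1 q = 1"
  using Leg_sq[OF assms, of 1] assms
  by (metis int_one_le_iff_zero_less nat_dvd_1_iff_1 not_prime_1 of_nat_1 one_power2 int_dvd_int_iff)

lemma exists_nqr:
  assumes "prime (q::nat)" "q > 2"
  shows "\<exists>N. 0 < N \<and> N < int q \<and> Legendre N q = -1"
proof -
  define S where "S = {1..int q - 1}"
  define f where "f = (\<lambda>x::int. x^2 mod int q)"
  have pq: "prime (int q)" using assms by simp
  have fS: "f ` S \<subseteq> S"
  proof
    fix z assume "z \<in> f ` S"
    then obtain x where x: "x \<in> S" "z = f x" by auto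
    have "\<not> int q dvd x" using x(1) unfolding S_def
      by (auto dest: zdvd_imp_le)
    then have "\<not> int q dvd x^2" using prime_dvd_power[OF pq] by blast
    then have "x^2 mod int q \<noteq> 0" by (simp add: dvd_eq_mod_eq_0)
    moreover have "x^2 mod int q \<ge> 0" "x^2 mod int q < int q" using assms(2) by simp_all
    ultimately show "z \<in> S" using x(2) unfolding S_def f_def by simp
  qed
  have "f 1 = f (int q - 1)"
  proof -
    have "(int q - 1)^2 = 1 + int q * (int q - 2)" by (simp add: power2_eq_square algebra_simps)
    then show ?thesis unfolding f_def by simp
  qed
  moreover have "1 \<noteq> int q - 1" "1 \<in> S" "int q - 1 \<in> S" using assms unfolding S_def by auto
  ultimately have "\<not> inj_on f S" unfolding inj_on_def by blast
  moreover have "finite S" unfolding S_def by simp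
  ultimately have "card (f ` S) < card S"
    using card_image_le inj_on_iff_eq_card le_neq_implies_less by metis
  then have "f ` S \<noteq> S" by auto
  then obtain N where N: "N \<in> S" "N \<notin> f ` S" using fS by blast
  have nd: "\<not> int q dvd N" using N(1) unfolding S_def by (auto dest: zdvd_imp_le)
  have "\<not> QuadRes q N"
  proof
    assume "QuadRes q N"
    then obtain y where y: "[y^2 = N] (mod int q)" unfolding QuadRes_def using cong_refl by blast
    have "[(y mod q)^2 = y^2] (mod int q)" by (simp add: cong_def power_mod)
    then have c: "[(y mod q)^2 = N] (mod int q)" using y cong_trans by blast
    have "\<not> int q dvd (y mod q)"
    proof
      assume "int q dvd (y mod q)"
      then have "int q dvd (y mod q)^2" by (simp add: power2_eq_square)
      then have "[(y mod q)^2 = 0] (mod int q)" by (simp add: cong_0_iff)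
      then have "int q dvd N" using c by (metis cong_0_iff cong_sym cong_trans)
      then show False using nd by simp
    qed
    then have "y mod q \<noteq> 0" by auto
    moreover have "y mod int q \<ge> 0" "y mod int q < int q" using assms(2) by simp_all
    ultimately have "y mod q \<in> S" unfolding S_def by simp
    moreover have "f (y mod q) = N" using c N(1) unfolding f_def S_def cong_def by simp
    ultimately show False using N(2) by blast
  qed
  then have "Legendre N q = -1" using nd unfolding Legendre_def by (simp add: cong_0_iff)
  then show ?thesis using N(1) unfolding S_def by (intro exI[of _ N]) auto
qed

lemma exists_consec:
  assumes "prime (q::nat)" "q > 2"
  shows "\<exists>k::int. \<not> int q dvd k \<and> Legendre k q = 1 \<and> Legendre (k+1) q = -1"
proof -
  obtain N where N: "0 < N" "N < int q" "Legendre N q = -1" using exists_nqr[OF assms] by blast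
  define P where "P = (\<lambda>m::nat. 0 < m \<and> m < q \<and> Legendre (int m) q = -1)"
  have "P (nat N)" using N unfolding P_def by auto
  define m where "m = (LEAST m. P m)"
  have Pm: "P m" unfolding m_def using \<open>P (nat N)\<close> by (rule LeastI)
  have "m \<noteq> 1" using Pm Leg_one[OF assms(1)] unfolding P_def by auto
  then have m1: "0 < m - 1" "m - 1 < q" using Pm unfolding P_def by auto
  have "\<not> P (m - 1)" unfolding m_def
    using m1 not_less_Least[of "m - 1" P] m_def by auto
  then have "Legendre (int (m - 1)) q \<noteq> -1" using m1 unfolding P_def by auto
  moreover have nd: "\<not> int q dvd int (m - 1)" using m1 by (auto dest: zdvd_imp_le)
  ultimately have "Legendre (int (m - 1)) q = 1"
    using Leg_vals[of "int (m-1)" q] Leg_zero_iff by auto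
  moreover have "int (m - 1) + 1 = int m" using m1 by auto
  ultimately show ?thesis using Pm nd unfolding P_def by metis
qed



lemma Leg_pm: assumes "\<not> p dvd a" shows "Legendre a p \<in> {1,-1}"
  using Leg_vals[of a p] Leg_zero_iff[of a p] assms by auto

lemma W0pos:
  assumes "prime (q::nat)" "q \<ge> 7" "e3 \<in> {1,-1::int}"
  shows "\<exists>w1 w2 w3. Legendre w1 q = 1 \<and> Legendre w2 q = 1 \<and> Legendre w3 q = e3
     \<and> int q dvd w1 + w2 + w3"
proof -
  have q2: "q > 2" using assms by simp
  have nd: "\<not> int q dvd z" if "0 < z" "z < int q" for z using that by (auto dest: zdvd_imp_le)
  define c where "c = Legendre (-1) q"
  have c: "c \<in> {1,-1}" unfolding c_def using Leg_pm nd[of 1] q2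
    by (metis dvd_minus_iff int_one_le_iff_zero_less less_trans nat_int_comparison(2) of_nat_1 one_less_numeral_iff semiring_norm(76) zero_less_one)
  have L9: "Legendre 9 q = 1" using Leg_sq[OF assms(1), of 3] nd[of 3] assms(2) by simp
  have L16: "Legendre 16 q = 1" using Leg_sq[OF assms(1), of 4] nd[of 4] assms(2) by simp
  have L25: "Legendre 25 q = 1" using Leg_sq[OF assms(1), of 5] nd[of 5] assms(2) by simp
  have Lm25: "Legendre (-25) q = c" using Leg_mult[OF assms(1) q2, of "-1" 25] L25 unfolding c_def by simp
  obtain k where k: "Legendre k q = 1" "Legendre (k+1) q = -1" using exists_consec[OF assms(1) q2] by blast
  have Lk1: "Legendre (-(k+1)) q = -c" using Leg_mult[OF assms(1) q2, of "-1" "k+1"] k unfolding c_def by simp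
  have L1: "Legendre 1 q = 1" using Leg_one[OF assms(1)] .
  show ?thesis
  proof (cases "e3 = c")
    case True
    then show ?thesis using L9 L16 Lm25 by (intro exI[of _ 9] exI[of _ 16] exI[of _ "-25"]) simp
  next
    case False
    then have "e3 = -c" using c assms(3) by auto
    then show ?thesis using k L1 Lk1 by (intro exI[of _ k] exI[of _ 1] exI[of _ "-(k+1)"]) simp
  qed
qed

lemma W0:
  assumes "prime (q::nat)" "q \<ge> 7" "e \<in> {1,-1::int}" "e3 \<in> {1,-1::int}"
  shows "\<exists>w1 w2 w3. Legendre w1 q = e \<and> Legendre w2 q = e \<and> Legendre w3 q = e3
     \<and> int q dvd w1 + w2 + w3"
proof (cases "e = 1")
  case True then show ?thesis using W0pos[OF assms(1,2,4)] by simp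
next
  case False
  then have e: "e = -1" using assms by auto
  have q2: "q > 2" using assms by simp
  obtain N where N: "Legendre N q = -1" using exists_nqr[OF assms(1) q2] by blast
  have "-e3 \<in> {1,-1}" using assms by auto
  then obtain w1 w2 w3 where w: "Legendre w1 q = 1" "Legendre w2 q = 1" "Legendre w3 q = -e3"
    "int q dvd w1 + w2 + w3" using W0pos[OF assms(1,2)] by blast
  have "int q dvd N * (w1 + w2 + w3)" using w(4) by simp
  then have "int q dvd N*w1 + N*w2 + N*w3" by (simp add: algebra_simps)
  moreover have "Legendre (N*w1) q = -1" "Legendre (N*w2) q = -1" "Legendre (N*w3) q = e3"
    using Leg_mult[OF assms(1) q2] N w by simp_all
  ultimately show ?thesis using e by blast
qed

lemma W:
  assumes "prime (q::nat)" "q \<ge> 7" "e1 \<in> {1,-1::int}" "e2 \<in> {1,-1::int}" "e3 \<in> {1,-1::int}"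
  shows "\<exists>w1 w2 w3. Legendre w1 q = e1 \<and> Legendre w2 q = e2 \<and> Legendre w3 q = e3
     \<and> int q dvd w1 + w2 + w3"
proof -
  consider "e1 = e2" | "e1 = e3" | "e2 = e3" using assms(3-5) by auto
  then show ?thesis
  proof cases
    case 1 then show ?thesis using W0[OF assms(1,2,3,5)] by simp
  next
    case 2
    then obtain w1 w2 w3 where "Legendre w1 q = e1" "Legendre w2 q = e1" "Legendre w3 q = e2"
     "int q dvd w1 + w2 + w3" using W0[OF assms(1,2,3,4)] by blast
    then show ?thesis using 2 by (intro exI[of _ w1] exI[of _ w3] exI[of _ w2]) (simp add: algebra_simps)
  next
    case 3
    then obtain w1 w2 w3 where "Legendre w1 q = e2" "Legendre w2 q = e2" "Legendre w3 q = e1"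
     "int q dvd w1 + w2 + w3" using W0[OF assms(1,2,4,3)] by blast
    then show ?thesis using 3 by (intro exI[of _ w3] exI[of _ w1] exI[of _ w2]) (simp add: algebra_simps)
  qed
qed

lemma T:
  assumes "prime (q::nat)" "q \<ge> 7" "\<not> int q dvd b1" "\<not> int q dvd b2" "\<not> int q dvd b3"
  shows "\<exists>s1 s2 s3. Legendre s1 q = 1 \<and> Legendre s2 q = 1 \<and> Legendre s3 q = 1
     \<and> int q dvd s1*b1 + s2*b2 + s3*b3"
proof -
  have q2: "q > 2" using assms by simp
  have pq: "prime (int q)" using assms by simp
  obtain w1 w2 w3 where w: "Legendre w1 q = Legendre b1 q" "Legendre w2 q = Legendre b2 q"
    "Legendre w3 q = Legendre b3 q" "int q dvd w1 + w2 + w3"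
    using W[OF assms(1,2) Leg_pm Leg_pm Leg_pm] assms(3-5) by blast
  have nd: "\<not> int q dvd b1*b2" "\<not> int q dvd b2*b3" "\<not> int q dvd b1*b3"
    using assms(3-5) prime_dvd_mult_iff[OF pq] by auto
  define s1 where "s1 = w1 * b1 * (b2*b3)^2"
  define s2 where "s2 = w2 * b2 * (b1*b3)^2"
  define s3 where "s3 = w3 * b3 * (b1*b2)^2"
  have sq: "Legendre x q * Legendre x q = 1" if "\<not> int q dvd x" for x
    using Leg_pm[OF that] by auto
  have "Legendre s1 q = 1" unfolding s1_def
    using Leg_mult[OF assms(1) q2] Leg_sq[OF assms(1) nd(2)] w(1) sq[OF assms(3)] by simp
  moreover have "Legendre s2 q = 1" unfolding s2_def
    using Leg_mult[OF assms(1) q2] Leg_sq[OF assms(1) nd(3)] w(2) sq[OF assms(4)] by simp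
  moreover have "Legendre s3 q = 1" unfolding s3_def
    using Leg_mult[OF assms(1) q2] Leg_sq[OF assms(1) nd(1)] w(3) sq[OF assms(5)] by simp
  moreover have "s1*b1 + s2*b2 + s3*b3 = (w1 + w2 + w3) * (b1*b2*b3)^2"
    unfolding s1_def s2_def s3_def by (simp add: algebra_simps power2_eq_square)
  ultimately show ?thesis using w(4) by (metis dvd_mult2)
qed



lemma Pp:
  fixes x :: "'a \<Rightarrow> int"
  assumes "prime (p::nat)" "finite I"
    and "card {i\<in>I. \<not> int p dvd x i} \<noteq> 1" "card {i\<in>I. \<not> int p dvd x i} < p"
  shows "\<exists>u. (\<forall>i\<in>I. \<not> int p dvd u i) \<and> int p dvd (\<Sum>i\<in>I. u i * x i)"
proof -
  define K where "K = {i\<in>I. \<not> int p dvd x i}"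
  have pp: "prime (int p)" using assms by simp
  have fK: "finite K" "K \<subseteq> I" unfolding K_def using assms by auto
  have split: "(\<Sum>i\<in>I. u i * x i) = (\<Sum>i\<in>I-K. u i * x i) + (\<Sum>i\<in>K. u i * x i)" for u
    using sum.subset_diff[OF fK(2) assms(2)] by simp
  have rest: "int p dvd (\<Sum>i\<in>I-K. u i * x i)" for u
    by (rule dvd_sum) (auto simp: K_def)
  have nd1: "\<not> int p dvd 1" using assms(1) by (metis int_dvd_int_iff nat_dvd_1_iff_1 not_prime_1 of_nat_1)
  show ?thesis
  proof (cases "K = {}")
    case True
    then show ?thesis using split[of "\<lambda>_. 1"] rest[of "\<lambda>_. 1"] True nd1 by (intro exI[of _ "\<lambda>_. 1"]) auto
  next
    case False
    then obtain i0 where i0: "i0 \<in> K" by blast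
    define k where "k = card K"
    have "k \<noteq> 0" using False fK(1) unfolding k_def by simp
    then have k2: "k \<ge> 2" "k < p" using assms(3,4) unfolding k_def K_def by auto
    define P where "P = prod x K"
    define u where "u = (\<lambda>i. if i \<in> K then (if i = i0 then -(int k - 1) * prod x (K - {i0}) else prod x (K - {i})) else 1)"
    have ndprod: "\<not> int p dvd prod x (K - {i})" for i
      using prime_dvd_prod_iff[OF _ pp, of "K - {i}" x] fK unfolding K_def by auto
    have ndk: "\<not> int p dvd (int k - 1)"
    proof
      assume "int p dvd (int k - 1)"
      then have "int p \<le> int k - 1" using k2 by (intro zdvd_imp_le) auto
      then show False using k2 by simp
    qed
    have ndk': "\<not> int p dvd (1 - int k)" using ndk
      by (metis dvd_minus_iff minus_diff_eq)
    have "\<forall>i\<in>I. \<not> int p dvd u i"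
    proof
      fix i assume "i \<in> I"
      show "\<not> int p dvd u i"
      proof (cases "i \<in> K")
        case True
        then show ?thesis unfolding u_def using ndprod ndk ndk' prime_dvd_mult_iff[OF pp]
          by (auto simp del: of_nat_diff)
      next
        case False
        then show ?thesis unfolding u_def using nd1 by simp
      qed
    qed
    moreover have "(\<Sum>i\<in>K. u i * x i) = 0"
    proof -
      have PK: "x i * prod x (K - {i}) = P" if "i \<in> K" for i
        unfolding P_def using prod.remove[OF fK(1) that, of x] by simp
      have "(\<Sum>i\<in>K. u i * x i) = u i0 * x i0 + (\<Sum>i\<in>K - {i0}. u i * x i)"
        using sum.remove[OF fK(1) i0] by simp
      also have "(\<Sum>i\<in>K - {i0}. u i * x i) = (\<Sum>i\<in>K - {i0}. P)"
        by (rule sum.cong) (auto simp: u_def PK mult.commute)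
      also have "\<dots> = int (k - 1) * P" using fK(1) i0 unfolding k_def by simp
      also have "u i0 * x i0 = -(int k - 1) * P" unfolding u_def using i0 PK[OF i0] by (simp add: algebra_simps)
      finally show ?thesis using k2 by (simp add: algebra_simps)
    qed
    ultimately show ?thesis using split[of u] rest[of u] by (intro exI[of _ u]) auto
  qed
qed

lemma Tq:
  fixes x :: "'a \<Rightarrow> int"
  assumes "prime (q::nat)" "q \<ge> 7" "finite I"
    and "card {i\<in>I. \<not> int q dvd x i} \<in> {0,3}"
  shows "\<exists>s. (\<forall>i\<in>I. Legendre (s i) q = 1) \<and> int q dvd (\<Sum>i\<in>I. s i * x i)"
proof -
  define K where "K = {i\<in>I. \<not> int q dvd x i}"
  have fK: "finite K" "K \<subseteq> I" unfolding K_def using assms by auto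
  have split: "(\<Sum>i\<in>I. u i * x i) = (\<Sum>i\<in>I-K. u i * x i) + (\<Sum>i\<in>K. u i * x i)" for u
    using sum.subset_diff[OF fK(2) assms(3)] by simp
  have rest: "int q dvd (\<Sum>i\<in>I-K. u i * x i)" for u
    by (rule dvd_sum) (auto simp: K_def)
  have L1: "Legendre 1 q = 1" using Leg_one[OF assms(1)] .
  show ?thesis
  proof (cases "card K = 0")
    case True
    then have "K = {}" using fK by simp
    then show ?thesis using split[of "\<lambda>_. 1"] rest[of "\<lambda>_. 1"] L1 by (intro exI[of _ "\<lambda>_. 1"]) auto
  next
    case False
    then have "card K = 3" using assms(4) unfolding K_def by auto
    then obtain i j k where K: "K = {i,j,k}" "i \<noteq> j" "j \<noteq> k" "i \<noteq> k" by (auto simp: card_3_iff)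
    have "\<not> int q dvd x i" "\<not> int q dvd x j" "\<not> int q dvd x k" using K(1) unfolding K_def by auto
    then obtain s1 s2 s3 where s: "Legendre s1 q = 1" "Legendre s2 q = 1" "Legendre s3 q = 1"
      "int q dvd s1 * x i + s2 * x j + s3 * x k" using T[OF assms(1,2)] by blast
    define s where "s = (\<lambda>m. if m = i then s1 else if m = j then s2 else if m = k then s3 else 1)"
    have "(\<Sum>m\<in>K. s m * x m) = s1 * x i + s2 * x j + s3 * x k"
      using K unfolding s_def by (simp add: algebra_simps)
    then show ?thesis using split[of s] rest[of s] s L1 by (intro exI[of _ s]) (auto simp: s_def)
  qed
qed



lemma card_filter_sum: "finite I \<Longrightarrow> card {i\<in>I. P i} = (\<Sum>i\<in>I. if P i then 1 else 0)"
  by (simp add: sum.If_cases Int_def conj_commute)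

lemma comb:
  fixes P Q :: "nat \<Rightarrow> bool"
  shows "\<exists>I \<subseteq> {..<4}. I \<noteq> {} \<and> card {i\<in>I. P i} \<noteq> 1 \<and> card {i\<in>I. Q i} \<in> {0,3}"
proof -
  have "\<exists>I \<in> {{0},{1},{2},{3},{0,1},{0,2},{0,3},{1,2},{1,3},{2,3},{0,1,2},{0,1,3},{0,2,3},{1,2,3},{0,1,2,3}}.
     (\<Sum>i\<in>I. if P i then 1 else 0::nat) \<noteq> 1 \<and> (\<Sum>i\<in>I. if Q i then 1 else 0::nat) \<in> {0,3}"
    by (cases "P 0"; cases "P 1"; cases "P 2"; cases "P 3"; cases "Q 0"; cases "Q 1"; cases "Q 2"; cases "Q 3")
       simp_all
  then obtain I where "I \<in> {{0},{1},{2},{3},{0,1},{0,2},{0,3},{1,2},{1,3},{2,3},{0,1,2},{0,1,3},{0,2,3},{1,2,3},{0,1,2,3::nat}}"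
     "(\<Sum>i\<in>I. if P i then 1 else 0::nat) \<noteq> 1 \<and> (\<Sum>i\<in>I. if Q i then 1 else 0::nat) \<in> {0,3}" by blast
  moreover from this(1) have "I \<subseteq> {..<4}" "I \<noteq> {}" "finite I" by auto
  ultimately have "I \<subseteq> {..<4}" "I \<noteq> {}" "card {i\<in>I. P i} \<noteq> 1 \<and> card {i\<in>I. Q i} \<in> {0,3}"
    by (simp_all add: card_filter_sum)
  then show ?thesis by blast
qed



lemma jac:
  assumes "prime (p::nat)" "prime q" "p \<noteq> q"
  shows "jacobi_sym a (p*q) = Legendre a p * Legendre a q"
proof -
  have pf: "prime_factors (p*q) = {p,q}"
    using prime_factors_product[of p q] assms prime_prime_factors by (auto simp: prime_gt_0_nat)
  have m1: "multiplicity p (p*q) = 1"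
    using prime_elem_multiplicity_mult_distrib[of p p q] assms prime_multiplicity_other[of p q]
    by (simp add: prime_gt_0_nat)
  have m2: "multiplicity q (p*q) = 1"
    using prime_elem_multiplicity_mult_distrib[of q p q] assms prime_multiplicity_other[of q p]
    by (simp add: prime_gt_0_nat)
  show ?thesis unfolding jacobi_sym_def pf using assms(3) m1 m2 by simp
qed

lemma coprime_prime_iff_int:
  assumes "prime (p::nat)" shows "coprime a (int p) \<longleftrightarrow> \<not> int p dvd a"
proof
  assume "coprime a (int p)" then show "\<not> int p dvd a"
    using assms not_coprimeI[of "int p" a "int p"]
    by (metis coprime_commute dvd_refl not_prime_unit prime_nat_int_transfer)
next
  assume "\<not> int p dvd a" then show "coprime a (int p)"
    using prime_imp_coprime[of "int p" a] assms by (simp add: coprime_commute)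
qed

lemma Lset_iff:
  assumes "prime (p::nat)" "prime q" "p \<noteq> q" "n = p*q"
  shows "a \<in> L_set n p \<longleftrightarrow> 0 \<le> a \<and> a < int n \<and> \<not> int p dvd a \<and> \<not> int q dvd a \<and> Legendre a q = 1"
proof -
  have cop: "coprime a (int n) \<longleftrightarrow> \<not> int p dvd a \<and> \<not> int q dvd a"
    using assms coprime_prime_iff_int[OF assms(1)] coprime_prime_iff_int[OF assms(2)] by simp
  have "Legendre a p \<noteq> 0" if "\<not> int p dvd a" using that Leg_zero_iff by simp
  then show ?thesis unfolding L_set_def units_mod_def Zn_def
    using jac[OF assms(1-3), of a] assms(4) cop by auto
qed

lemma assemble:
  assumes "prime (p::nat)" "prime q" "p \<noteq> q" "n = p*q"
    and "I \<subseteq> {..<length xs}" "I \<noteq> {}"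
    and "\<forall>i\<in>I. \<not> int p dvd u i \<and> Legendre (s i) q = 1"
    and "int p dvd (\<Sum>i\<in>I. u i * xs ! i)" "int q dvd (\<Sum>i\<in>I. s i * xs ! i)"
  shows "has_weighted_zero_sum_subseq n (L_set n p) xs"
proof -
  have cpq: "coprime (int p) (int q)" using assms(1-3) by (simp add: primes_coprime)
  have "\<forall>i. \<exists>a. [a = u i] (mod int p) \<and> [a = s i] (mod int q)"
    using binary_chinese_remainder_int[OF cpq] by blast
  then have "\<exists>a0. \<forall>i. [a0 i = u i] (mod int p) \<and> [a0 i = s i] (mod int q)" by (rule choice)
  then obtain a0 where a0: "\<And>i. [a0 i = u i] (mod int p) \<and> [a0 i = s i] (mod int q)" by blast
  define a where "a = (\<lambda>i. a0 i mod int n)"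
  have np: "int p dvd int n" "int q dvd int n" using assms(4) by simp_all
  have ap: "[a i = u i] (mod int p)" for i
    using a0[of i] np unfolding a_def cong_def by (simp add: mod_mod_cancel)
  have aq: "[a i = s i] (mod int q)" for i
    using a0[of i] np unfolding a_def cong_def by (simp add: mod_mod_cancel)
  have n0: "int n > 0" using assms(1,2,4) by (simp add: prime_gt_0_nat)
  have aL: "a i \<in> L_set n p" if "i \<in> I" for i
  proof -
    have "\<not> int p dvd a i" using cong_dvd_iff[OF ap[of i]] assms(7) that by simp
    moreover have L: "Legendre (a i) q = 1" using Leg_cong[OF aq[of i]] assms(7) that by simp
    moreover have "\<not> int q dvd a i" using Leg_zero_iff[of "a i" "int q"] L by simp
    moreover have "0 \<le> a i" "a i < int n" unfolding a_def using n0 by simp_all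
    ultimately show ?thesis using Lset_iff[OF assms(1-4)] by blast
  qed
  have "[(\<Sum>i\<in>I. a i * xs ! i) = (\<Sum>i\<in>I. u i * xs ! i)] (mod int p)"
    by (intro cong_sum cong_mult ap cong_refl)
  then have dp: "int p dvd (\<Sum>i\<in>I. a i * xs ! i)" using assms(8) cong_dvd_iff by blast
  have "[(\<Sum>i\<in>I. a i * xs ! i) = (\<Sum>i\<in>I. s i * xs ! i)] (mod int q)"
    by (intro cong_sum cong_mult aq cong_refl)
  then have dq: "int q dvd (\<Sum>i\<in>I. a i * xs ! i)" using assms(9) cong_dvd_iff by blast
  have "int p * int q dvd (\<Sum>i\<in>I. a i * xs ! i)" using divides_mult[OF dp dq cpq] by blast
  then have "int n dvd (\<Sum>i\<in>I. a i * xs ! i)" using assms(4) by simp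
  then have "(\<Sum>i\<in>I. a i * xs ! i) mod int n = 0" by (simp only: dvd_eq_mod_eq_0)
  then show ?thesis unfolding has_weighted_zero_sum_subseq_def
    using assms(5,6) aL by (intro exI[of _ I] exI[of _ a]) simp
qed



lemma upper:
  assumes "prime (p::nat)" "prime q" "p \<noteq> q" "p \<ge> 7" "q \<ge> 7" "n = p*q" "length xs = 4"
  shows "has_weighted_zero_sum_subseq n (L_set n p) xs"
proof -
  obtain I where I: "I \<subseteq> {..<4}" "I \<noteq> {}" "card {i\<in>I. \<not> int p dvd xs ! i} \<noteq> 1"
    "card {i\<in>I. \<not> int q dvd xs ! i} \<in> {0,3}"
    using comb[of "\<lambda>i. \<not> int p dvd xs ! i" "\<lambda>i. \<not> int q dvd xs ! i"] by blast
  have fI: "finite I" using I(1) finite_subset by blast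
  have "card {i\<in>I. \<not> int p dvd xs ! i} \<le> card {..<4::nat}"
    using I(1) by (intro card_mono) auto
  then have "card {i\<in>I. \<not> int p dvd xs ! i} < p" using assms(4) by simp
  then obtain u where u: "\<forall>i\<in>I. \<not> int p dvd u i" "int p dvd (\<Sum>i\<in>I. u i * xs ! i)"
    using Pp[OF assms(1) fI I(3)] by blast
  obtain s where s: "\<forall>i\<in>I. Legendre (s i) q = 1" "int q dvd (\<Sum>i\<in>I. s i * xs ! i)"
    using Tq[OF assms(2,5) fI I(4)] by blast
  show ?thesis using assemble[OF assms(1,2,3,6) _ I(2), where u=u and s=s] I(1) assms(7) u s by simp
qed

lemma exists_t:
  assumes "prime (q::nat)" "q > 2"
  shows "\<exists>t. 0 < t \<and> t < int q \<and> Legendre (-t) q = -1"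
proof -
  obtain N where N: "0 < N" "N < int q" "Legendre N q = -1" using exists_nqr[OF assms] by blast
  have "[-(int q - N) = N] (mod int q)" unfolding cong_def by simp
  then have "Legendre (-(int q - N)) q = -1" using Leg_cong N(3) by metis
  then show ?thesis using N by (intro exI[of _ "int q - N"]) simp
qed

lemma lower:
  assumes "prime (p::nat)" "prime q" "p \<noteq> q" "q > 2" "n = p*q"
    and "0 < t" "t < int q" "Legendre (-t) q = -1"
  shows "\<not> has_weighted_zero_sum_subseq n (L_set n p) [int q, int p, int p * t]"
proof
  define xs where "xs = [int q, int p, int p * t]"
  assume "has_weighted_zero_sum_subseq n (L_set n p) [int q, int p, int p * t]"
  then have "has_weighted_zero_sum_subseq n (L_set n p) xs" unfolding xs_def .
  have len3: "length xs = 3" unfolding xs_def by simp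
  from \<open>has_weighted_zero_sum_subseq n (L_set n p) xs\<close> obtain I a where
    I0: "I \<subseteq> {..<length xs} \<and> I \<noteq> {} \<and> (\<forall>i\<in>I. a i \<in> L_set n p) \<and>
    (\<Sum>i\<in>I. a i * xs ! i) mod int n = 0"
    unfolding has_weighted_zero_sum_subseq_def by (elim exE) (rule that)
  then have I: "I \<subseteq> {..<3}" "I \<noteq> {}" "\<forall>i\<in>I. a i \<in> L_set n p"
    "(\<Sum>i\<in>I. a i * xs ! i) mod int n = 0" unfolding len3 by blast+
  have aL: "\<not> int p dvd a i \<and> \<not> int q dvd a i \<and> Legendre (a i) q = 1" if "i \<in> I" for i
    using I(3) that Lset_iff[OF assms(1-3,5)] by blast
  have I3: "I \<subseteq> {0,1,2}" using I(1) by auto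
  define R where "R = (if 1 \<in> I then a 1 else 0) + (if 2 \<in> I then a 2 * t else 0)"
  have "(\<Sum>i\<in>I. a i * xs ! i) = (\<Sum>i\<in>{0,1,2}. if i \<in> I then a i * xs ! i else 0)"
    using sum.inter_restrict[of "{0,1,2::nat}" "\<lambda>i. a i * xs ! i" I] I3 by (simp add: Int_absorb1)
  also have "\<dots> = (if 0 \<in> I then a 0 * int q else 0) + int p * R"
    unfolding R_def xs_def by (simp add: algebra_simps)
  finally have S: "(\<Sum>i\<in>I. a i * xs ! i) = (if 0 \<in> I then a 0 * int q else 0) + int p * R" .
  have dn: "int n dvd (\<Sum>i\<in>I. a i * xs ! i)" using I(4) by (simp add: dvd_eq_mod_eq_0)
  then have dp: "int p dvd (\<Sum>i\<in>I. a i * xs ! i)" and dq: "int q dvd (\<Sum>i\<in>I. a i * xs ! i)"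
    using assms(5) by (auto intro: dvd_mult_left dvd_mult_right)
  have pp: "prime (int p)" and pq: "prime (int q)" using assms by simp_all
  have npq: "\<not> int p dvd int q" "\<not> int q dvd int p"
    using assms(1-3) primes_dvd_imp_eq by (metis int_dvd_int_iff)+
  have "0 \<notin> I"
  proof
    assume "0 \<in> I"
    then have "int p dvd a 0 * int q + int p * R" using dp S by simp
    then have "int p dvd a 0 * int q" by (simp add: dvd_add_left_iff)
    then show False using prime_dvd_mult_iff[OF pp] npq aL[OF \<open>0 \<in> I\<close>] by blast
  qed
  then have "int q dvd int p * R" using dq S by simp
  then have qR: "int q dvd R" using prime_dvd_mult_iff[OF pq] npq by blast
  have ntq: "\<not> int q dvd t" using assms(6,7) by (auto dest: zdvd_imp_le)
  have q2: "q > 2" using assms by simp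
  consider "1 \<in> I" "2 \<in> I" | "1 \<in> I" "2 \<notin> I" | "1 \<notin> I" "2 \<in> I" | "1 \<notin> I" "2 \<notin> I" by blast
  then show False
  proof cases
    case 1
    then have "int q dvd a 1 + a 2 * t" using qR R_def by simp
    then have "[a 1 = -(a 2 * t)] (mod int q)"
      by (simp add: cong_iff_dvd_diff)
    then have "Legendre (a 1) q = Legendre (a 2 * (-t)) q" using Leg_cong by simp
    also have "\<dots> = -1" using Leg_mult[OF assms(2) q2, of "a 2" "-t"] aL[OF 1(2)] assms(8) by simp
    finally show False using aL[OF 1(1)] by simp
  next
    case 2 then show False using qR R_def aL by simp
  next
    case 3 then have "int q dvd a 2 * t" using qR R_def by simp
    then show False using prime_dvd_mult_iff[OF pq] aL[OF 3(2)] ntq by blast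
  next
    case 4 then show False using I(2) I3 \<open>0 \<notin> I\<close> by auto
  qed
qed

lemma has_take:
  assumes "has_weighted_zero_sum_subseq n A (take k xs)"
  shows "has_weighted_zero_sum_subseq n A xs"
proof -
  from assms obtain I a where
    I0: "I \<subseteq> {..<length (take k xs)} \<and> I \<noteq> {} \<and> (\<forall>i\<in>I. a i \<in> A) \<and>
    (\<Sum>i\<in>I. a i * take k xs ! i) mod int n = 0"
    unfolding has_weighted_zero_sum_subseq_def by (elim exE) (rule that)
  have sub: "I \<subseteq> {..<length xs}" using I0 by auto
  have "\<And>i. i \<in> I \<Longrightarrow> take k xs ! i = xs ! i"
  proof -
    fix i assume "i \<in> I"
    then have "i < length (take k xs)" using I0 by blast
    then show "take k xs ! i = xs ! i" by simp
  qed
  then have "(\<Sum>i\<in>I. a i * take k xs ! i) = (\<Sum>i\<in>I. a i * xs ! i)"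
    by (intro sum.cong) simp_all
  then have "I \<subseteq> {..<length xs} \<and> I \<noteq> {} \<and> (\<forall>i\<in>I. a i \<in> A) \<and>
    (\<Sum>i\<in>I. a i * xs ! i) mod int n = 0" using I0 sub by simp
  note fin = this
  show ?thesis unfolding has_weighted_zero_sum_subseq_def
    by (intro exI[of _ I] exI[of _ a]) (rule fin)
qed

theorem theorem3p8:
  fixes p' q n :: nat
  assumes "prime p'" and "prime q" and "p' \<noteq> q"
    and "p' \<ge> 7" and "q \<ge> 7"
    and "n = p' * q"
  shows "D_weighted (L_set n p') n = 4"
  unfolding D_weighted_def
proof (rule Least_equality)
  show "\<forall>xs. length xs = 4 \<and> set xs \<subseteq> Zn n \<longrightarrow> has_weighted_zero_sum_subseq n (L_set n p') xs"
    using upper[OF assms] by blast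
next
  fix y assume H: "\<forall>xs. length xs = y \<and> set xs \<subseteq> Zn n \<longrightarrow> has_weighted_zero_sum_subseq n (L_set n p') xs"
  show "4 \<le> y"
  proof (rule ccontr)
    assume "\<not> 4 \<le> y"
    then have y3: "y \<le> 3" by simp
    have q2: "q > 2" using assms by simp
    obtain t where t: "0 < t" "t < int q" "Legendre (-t) q = -1" using exists_t[OF assms(2) q2] by blast
    define xs where "xs = [int q, int p', int p' * t]"
    have p0: "p' > 0" "q > 0" using assms by (simp_all add: prime_gt_0_nat)
    have n_eq: "int n = int p' * int q" using assms(6) by simp
    have f1: "int p' * t < int p' * int q" using t p0 by (intro mult_strict_left_mono) simp_all
    have "int q * 1 < int q * int p'" using p0 assms(4) by (intro mult_strict_left_mono) simp_all
    then have f2: "int q < int p' * int q" by (simp add: mult.commute)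
    have "int p' * 1 < int p' * int q" using p0 assms(5) by (intro mult_strict_left_mono) simp_all
    then have f3: "int p' < int p' * int q" by simp
    have f4: "0 \<le> int p' * t" using t by simp
    have "set xs = {int q, int p', int p' * t}" unfolding xs_def by simp
    moreover have "{int q, int p', int p' * t} \<subseteq> {0..<int p' * int q}"
      using f1 f2 f3 f4 by (simp only: insert_subset atLeastLessThan_iff empty_subsetI) simp
    ultimately have "set xs \<subseteq> Zn n" unfolding Zn_def n_eq by simp
    then have "set (take y xs) \<subseteq> Zn n" using set_take_subset[of y xs] by (rule order_trans[rotated])
    moreover have "length (take y xs) = y" using y3 unfolding xs_def by simp
    ultimately have "has_weighted_zero_sum_subseq n (L_set n p') (take y xs)" using H by blast
    then have "has_weighted_zero_sum_subseq n (L_set n p') xs" by (rule has_take)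
    then show False using lower[OF assms(1-3) q2 assms(6) t] unfolding xs_def by blast
  qed
qed


end
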